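(* Let $\mathcal{Q}$ be a small involutive quantaloid and $\mathbb{A}$ a symmetric $\mathcal{Q}$-category. The following are equivalent: (1) $\mathbb{A}$ is symmetrically complete, i.e. for every symmetric $\mathcal{Q}$-category $\mathbb{B}$, the map $F\mapsto\mathbb{A}(-,F-)$ from the ordered set of functors $\mathbb{B}\to\mathbb{A}$ to the ordered set of symmetric left adjoint distributors $\mathbb{B}\to\mathbb{A}$ is an equivalence; (2) for every symmetric $\mathcal{Q}$-category $\mathbb{B}$, every symmetric left adjoint distributor $\Phi\colon\mathbb{B}\to\mathbb{A}$ is representable; (3) for every $X\in\mathcal{Q}_0$, every symmetric left adjoint presheaf $\phi\colon *_X\to\mathbb{A}$ is representable.
   Context: A quantaloid is a category enriched in $\mathsf{Sup}$; an involution is an identity-on-objects, direction-reversing, monotone map $f\mapsto f^{\mathsf o}$ on morphisms with $(g\circ f)^{\mathsf o}=f^{\mathsf o}\circ g^{\mathsf o}$, $f^{\mathsf{oo}}=f$. A $\mathcal{Q}$-category $\mathbb{A}$: objects $\mathbb{A}_0$ with types $tx$, homs $\mathbb{A}(y,x)\colon tx\to ty$ with $\mathbb{A}(z,y)\circ\mathbb{A}(y,x)\le\mathbb{A}(z,x)$, $1_{tx}\le\mathbb{A}(x,x)$; symmetric if $\mathbb{A}(x,y)=\mathbb{A}(y,x)^{\mathsf o}$. A functor $F\colon\mathbb{B}\to\mathbb{A}$ is a type-preserving object map with $\mathbb{B}(y,x)\le\mathbb{A}(Fy,Fx)$; functors are preordered by $F\le G$ iff $1_{tx}\le\mathbb{A}(Fx,Gx)$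 for all $x$. A distributor $\Phi\colon\mathbb{B}\to\mathbb{A}$: arrows $\Phi(a,b)\colon tb\to ta$ with $\mathbb{A}(a',a)\circ\Phi(a,b)\le\Phi(a',b)$ and $\Phi(a,b)\circ\mathbb{B}(b,b')\le\Phi(a,b')$; composition $(\Psi\otimes\Phi)(z,x)=\bigvee_y\Psi(z,y)\circ\Phi(y,x)$, identities the hom-families, elementwise order. $\Phi$ is a left adjoint with right adjoint $\Phi^*$ if $\mathbb{B}\le\Phi^*\otimes\Phi$, $\Phi\otimes\Phi^*\le\mathbb{A}$. For symmetric $\mathbb{A},\mathbb{B}$, $\Phi^{\mathsf o}\colon\mathbb{A}\to\mathbb{B}$ is $\Phi^{\mathsf o}(b,a)=\Phi(a,b)^{\mathsf o}$, and $\Phi$ is a symmetric left adjoint if it is left adjoint to $\Phi^{\mathsf o}$. $\Phi$ is representable if $\Phi=\mathbb{A}(-,F-)$ (elements $\mathbb{A}(a,Fb)$) for some functor $F$. $*_X$ is the one-object $\mathcal{Q}$-category of type $X$ with hom $1_X$; a presheaf is a distributor $*_X\to\mathbb{A}$. *)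

theory Defs
  imports Main
begin

text \<open>Every element of 'm is
a morphism with domain qdom and codomain qcod; qcomp g f is g after f; qsup X Y S is
the supremum of a set S of arrows X to Y in the hom-sup-lattice; qinv is the involution.\<close>

record ('o, 'm) quantaloid =
  qdom  :: "'m \<Rightarrow> 'o"
  qcod  :: "'m \<Rightarrow> 'o"
  qcomp :: "'m \<Rightarrow> 'm \<Rightarrow> 'm"
  qid   :: "'o \<Rightarrow> 'm"
  qle   :: "'m \<Rightarrow> 'm \<Rightarrow> bool"
  qsup  :: "'o \<Rightarrow> 'o \<Rightarrow> 'm set \<Rightarrow> 'm"
  qinv  :: "'m \<Rightarrow> 'm"

definition qhom :: "('o, 'm) quantaloid \<Rightarrow> 'o \<Rightarrow> 'o \<Rightarrow> 'm set" where
  "qhom Q X Y = {f. qdom Q f = X \<and> qcod Q f = Y}"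

definition is_quantaloid :: "('o, 'm) quantaloid \<Rightarrow> bool" where
  "is_quantaloid Q \<longleftrightarrow>
     \<comment> \<open>category structure\<close>
     (\<forall>X. qdom Q (qid Q X) = X \<and> qcod Q (qid Q X) = X) \<and>
     (\<forall>f g. qdom Q g = qcod Q f \<longrightarrow>
        qdom Q (qcomp Q g f) = qdom Q f \<and> qcod Q (qcomp Q g f) = qcod Q g) \<and>
     (\<forall>f. qcomp Q f (qid Q (qdom Q f)) = f \<and> qcomp Q (qid Q (qcod Q f)) f = f) \<and>
     (\<forall>f g h. qdom Q g = qcod Q f \<and> qdom Q h = qcod Q g \<longrightarrow>
        qcomp Q h (qcomp Q g f) = qcomp Q (qcomp Q h g) f) \<and>
     \<comment> \<open>each hom-set is partially ordered\<close>
     (\<forall>f g. qle Q f g \<longrightarrow> qdom Q f = qdom Q g \<and> qcod Q f = qcod Q g) \<and>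
     (\<forall>f. qle Q f f) \<and>
     (\<forall>f g. qle Q f g \<and> qle Q g f \<longrightarrow> f = g) \<and>
     (\<forall>f g h. qle Q f g \<and> qle Q g h \<longrightarrow> qle Q f h) \<and>
     \<comment> \<open>each hom-set is a complete lattice (all suprema exist)\<close>
     (\<forall>X Y S. S \<subseteq> qhom Q X Y \<longrightarrow>
        qsup Q X Y S \<in> qhom Q X Y \<and>
        (\<forall>f\<in>S. qle Q f (qsup Q X Y S)) \<and>
        (\<forall>g\<in>qhom Q X Y. (\<forall>f\<in>S. qle Q f g) \<longrightarrow> qle Q (qsup Q X Y S) g)) \<and>
     \<comment> \<open>composition preserves suprema in each variable (Sup-enrichment)\<close>
     (\<forall>X Y Z S g. S \<subseteq> qhom Q X Y \<and> g \<in> qhom Q Y Z \<longrightarrow>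
        qcomp Q g (qsup Q X Y S) = qsup Q X Z (qcomp Q g ` S)) \<and>
     (\<forall>X Y Z S f. f \<in> qhom Q X Y \<and> S \<subseteq> qhom Q Y Z \<longrightarrow>
        qcomp Q (qsup Q Y Z S) f = qsup Q X Z ((\<lambda>g. qcomp Q g f) ` S))"

definition is_involutive_quantaloid :: "('o, 'm) quantaloid \<Rightarrow> bool" where
  "is_involutive_quantaloid Q \<longleftrightarrow> is_quantaloid Q \<and>
     (\<forall>f. qdom Q (qinv Q f) = qcod Q f \<and> qcod Q (qinv Q f) = qdom Q f) \<and>
     (\<forall>f g. qle Q f g \<longrightarrow> qle Q (qinv Q f) (qinv Q g)) \<and>
     (\<forall>f g. qdom Q g = qcod Q f \<longrightarrow> qinv Q (qcomp Q g f) = qcomp Q (qinv Q f) (qinv Q g)) \<and>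
     (\<forall>f. qinv Q (qinv Q f) = f)"

text \<open>A Q-category: a set of objects qobj, types qty, homs qhm y x : ty x \<rightarrow> ty y.\<close>

record ('a, 'o, 'm) qcat =
  qobj :: "'a set"
  qty  :: "'a \<Rightarrow> 'o"
  qhm  :: "'a \<Rightarrow> 'a \<Rightarrow> 'm"

definition is_qcat :: "('o, 'm) quantaloid \<Rightarrow> ('a, 'o, 'm) qcat \<Rightarrow> bool" where
  "is_qcat Q A \<longleftrightarrow>
     (\<forall>x\<in>qobj A. \<forall>y\<in>qobj A. qhm A y x \<in> qhom Q (qty A x) (qty A y)) \<and>
     (\<forall>x\<in>qobj A. \<forall>y\<in>qobj A. \<forall>z\<in>qobj A.
        qle Q (qcomp Q (qhm A z y) (qhm A y x)) (qhm A z x)) \<and>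
     (\<forall>x\<in>qobj A. qle Q (qid Q (qty A x)) (qhm A x x))"

definition is_symmetric_qcat :: "('o, 'm) quantaloid \<Rightarrow> ('a, 'o, 'm) qcat \<Rightarrow> bool" where
  "is_symmetric_qcat Q A \<longleftrightarrow> is_qcat Q A \<and>
     (\<forall>x\<in>qobj A. \<forall>y\<in>qobj A. qhm A x y = qinv Q (qhm A y x))"

definition is_qfunctor ::
  "('o, 'm) quantaloid \<Rightarrow> ('b, 'o, 'm) qcat \<Rightarrow> ('a, 'o, 'm) qcat \<Rightarrow> ('b \<Rightarrow> 'a) \<Rightarrow> bool" where
  "is_qfunctor Q B A F \<longleftrightarrow>
     (\<forall>x\<in>qobj B. F x \<in> qobj A \<and> qty A (F x) = qty B x) \<and>
     (\<forall>x\<in>qobj B. \<forall>y\<in>qobj B. qle Q (qhm B y x) (qhm A (F y) (F x)))"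

definition qfunctor_le ::
  "('o, 'm) quantaloid \<Rightarrow> ('b, 'o, 'm) qcat \<Rightarrow> ('a, 'o, 'm) qcat \<Rightarrow> ('b \<Rightarrow> 'a) \<Rightarrow> ('b \<Rightarrow> 'a) \<Rightarrow> bool" where
  "qfunctor_le Q B A F G \<longleftrightarrow> (\<forall>x\<in>qobj B. qle Q (qid Q (qty B x)) (qhm A (F x) (G x)))"

text \<open>Distributors \<Phi> : B \<rightarrow> A, given by elements \<Phi> a b : ty b \<rightarrow> ty a.\<close>

definition is_distributor ::
  "('o, 'm) quantaloid \<Rightarrow> ('b, 'o, 'm) qcat \<Rightarrow> ('a, 'o, 'm) qcat \<Rightarrow> ('a \<Rightarrow> 'b \<Rightarrow> 'm) \<Rightarrow> bool" where
  "is_distributor Q B A \<Phi> \<longleftrightarrow>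
     (\<forall>a\<in>qobj A. \<forall>b\<in>qobj B. \<Phi> a b \<in> qhom Q (qty B b) (qty A a)) \<and>
     (\<forall>a\<in>qobj A. \<forall>a'\<in>qobj A. \<forall>b\<in>qobj B. qle Q (qcomp Q (qhm A a' a) (\<Phi> a b)) (\<Phi> a' b)) \<and>
     (\<forall>a\<in>qobj A. \<forall>b\<in>qobj B. \<forall>b'\<in>qobj B. qle Q (qcomp Q (\<Phi> a b) (qhm B b b')) (\<Phi> a b'))"

definition dist_le ::
  "('o, 'm) quantaloid \<Rightarrow> ('b, 'o, 'm) qcat \<Rightarrow> ('a, 'o, 'm) qcat \<Rightarrow>
   ('a \<Rightarrow> 'b \<Rightarrow> 'm) \<Rightarrow> ('a \<Rightarrow> 'b \<Rightarrow> 'm) \<Rightarrow> bool" where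
  "dist_le Q B A \<Phi> \<Psi> \<longleftrightarrow> (\<forall>a\<in>qobj A. \<forall>b\<in>qobj B. qle Q (\<Phi> a b) (\<Psi> a b))"

definition dist_comp ::
  "('o, 'm) quantaloid \<Rightarrow> ('c, 'o, 'm) qcat \<Rightarrow> ('b, 'o, 'm) qcat \<Rightarrow> ('a, 'o, 'm) qcat \<Rightarrow>
   ('a \<Rightarrow> 'b \<Rightarrow> 'm) \<Rightarrow> ('b \<Rightarrow> 'c \<Rightarrow> 'm) \<Rightarrow> ('a \<Rightarrow> 'c \<Rightarrow> 'm)" where
  "dist_comp Q C B A \<Psi> \<Phi> = (\<lambda>z x. qsup Q (qty C x) (qty A z)
       ((\<lambda>y. qcomp Q (\<Psi> z y) (\<Phi> y x)) ` qobj B))"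

definition dist_left_adjoint ::
  "('o, 'm) quantaloid \<Rightarrow> ('b, 'o, 'm) qcat \<Rightarrow> ('a, 'o, 'm) qcat \<Rightarrow>
   ('a \<Rightarrow> 'b \<Rightarrow> 'm) \<Rightarrow> ('b \<Rightarrow> 'a \<Rightarrow> 'm) \<Rightarrow> bool" where
  "dist_left_adjoint Q B A \<Phi> \<Psi> \<longleftrightarrow>
     is_distributor Q B A \<Phi> \<and> is_distributor Q A B \<Psi> \<and>
     dist_le Q B B (qhm B) (dist_comp Q B A B \<Psi> \<Phi>) \<and>
     dist_le Q A A (dist_comp Q A B A \<Phi> \<Psi>) (qhm A)"

definition dist_op :: "('o, 'm) quantaloid \<Rightarrow> ('a \<Rightarrow> 'b \<Rightarrow> 'm) \<Rightarrow> ('b \<Rightarrow> 'a \<Rightarrow> 'm)" where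
  "dist_op Q \<Phi> = (\<lambda>b a. qinv Q (\<Phi> a b))"

definition sym_left_adjoint ::
  "('o, 'm) quantaloid \<Rightarrow> ('b, 'o, 'm) qcat \<Rightarrow> ('a, 'o, 'm) qcat \<Rightarrow> ('a \<Rightarrow> 'b \<Rightarrow> 'm) \<Rightarrow> bool" where
  "sym_left_adjoint Q B A \<Phi> \<longleftrightarrow> dist_left_adjoint Q B A \<Phi> (dist_op Q \<Phi>)"

definition repr_dist :: "('a, 'o, 'm) qcat \<Rightarrow> ('b \<Rightarrow> 'a) \<Rightarrow> ('a \<Rightarrow> 'b \<Rightarrow> 'm)" where
  "repr_dist A F = (\<lambda>a b. qhm A a (F b))"

definition representable ::
  "('o, 'm) quantaloid \<Rightarrow> ('b, 'o, 'm) qcat \<Rightarrow> ('a, 'o, 'm) qcat \<Rightarrow> ('a \<Rightarrow> 'b \<Rightarrow> 'm) \<Rightarrow> bool" where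
  "representable Q B A \<Phi> \<longleftrightarrow>
     (\<exists>F. is_qfunctor Q B A F \<and> (\<forall>a\<in>qobj A. \<forall>b\<in>qobj B. \<Phi> a b = repr_dist A F a b))"

definition star_cat :: "('o, 'm) quantaloid \<Rightarrow> 'o \<Rightarrow> (unit, 'o, 'm) qcat" where
  "star_cat Q X = \<lparr>qobj = {()}, qty = (\<lambda>_. X), qhm = (\<lambda>_ _. qid Q X)\<rparr>"

text \<open>Symmetric completeness relative to symmetric Q-categories B whose objects live in
  the type 'b: the map F \<mapsto> A(-,F-) from functors B \<rightarrow> A to symmetric left adjoint
  distributors B \<rightarrow> A is well defined and an equivalence of preordered sets
  (order-preserving, order-reflecting, essentially surjective).\<close>

definition sym_complete_wrt ::
  "('o, 'm) quantaloid \<Rightarrow> ('a, 'o, 'm) qcat \<Rightarrow> ('b, 'o, 'm) qcat \<Rightarrow> bool" where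
  "sym_complete_wrt Q A B \<longleftrightarrow>
     (\<forall>F. is_qfunctor Q B A F \<longrightarrow> sym_left_adjoint Q B A (repr_dist A F)) \<and>
     (\<forall>F G. is_qfunctor Q B A F \<longrightarrow> is_qfunctor Q B A G \<longrightarrow>
        (qfunctor_le Q B A F G \<longleftrightarrow> dist_le Q B A (repr_dist A F) (repr_dist A G))) \<and>
     (\<forall>\<Phi>. sym_left_adjoint Q B A \<Phi> \<longrightarrow>
        (\<exists>F. is_qfunctor Q B A F \<and>
             dist_le Q B A (repr_dist A F) \<Phi> \<and> dist_le Q B A \<Phi> (repr_dist A F)))"

end

theory Submission
  imports Defs
begin

lemma q_ax_sup:
  assumes "is_quantaloid Q"
  shows "\<forall>X Y S. S \<subseteq> qhom Q X Y \<longrightarrow>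
        qsup Q X Y S \<in> qhom Q X Y \<and>
        (\<forall>f\<in>S. qle Q f (qsup Q X Y S)) \<and>
        (\<forall>g\<in>qhom Q X Y. (\<forall>f\<in>S. qle Q f g) \<longrightarrow> qle Q (qsup Q X Y S) g)"
  using assms unfolding is_quantaloid_def by (elim conjE) assumption

lemma q_ax_dl:
  assumes "is_quantaloid Q"
  shows "\<forall>X Y Z S g. S \<subseteq> qhom Q X Y \<and> g \<in> qhom Q Y Z \<longrightarrow>
        qcomp Q g (qsup Q X Y S) = qsup Q X Z (qcomp Q g ` S)"
  using assms unfolding is_quantaloid_def by (elim conjE) assumption

lemma q_ax_dr:
  assumes "is_quantaloid Q"
  shows "\<forall>X Y Z S f. f \<in> qhom Q X Y \<and> S \<subseteq> qhom Q Y Z \<longrightarrow>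
        qcomp Q (qsup Q Y Z S) f = qsup Q X Z ((\<lambda>g. qcomp Q g f) ` S)"
  using assms unfolding is_quantaloid_def by (elim conjE) assumption

lemma q_ax_lehom:
  assumes "is_quantaloid Q"
  shows "\<forall>f g. qle Q f g \<longrightarrow> qdom Q f = qdom Q g \<and> qcod Q f = qcod Q g"
  using assms unfolding is_quantaloid_def by (elim conjE) assumption

lemma q_ax_refl:
  assumes "is_quantaloid Q"
  shows "\<forall>f. qle Q f f"
  using assms unfolding is_quantaloid_def by (elim conjE) assumption

lemma q_ax_anti:
  assumes "is_quantaloid Q"
  shows "\<forall>f g. qle Q f g \<and> qle Q g f \<longrightarrow> f = g"
  using assms unfolding is_quantaloid_def by (elim conjE) assumption

lemma q_ax_trans:
  assumes "is_quantaloid Q"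
  shows "\<forall>f g h. qle Q f g \<and> qle Q g h \<longrightarrow> qle Q f h"
  using assms unfolding is_quantaloid_def by (elim conjE) assumption

lemma q_ax_id:
  assumes "is_quantaloid Q"
  shows "\<forall>X. qdom Q (qid Q X) = X \<and> qcod Q (qid Q X) = X"
  using assms unfolding is_quantaloid_def by (elim conjE) assumption

lemma q_ax_comp:
  assumes "is_quantaloid Q"
  shows "\<forall>f g. qdom Q g = qcod Q f \<longrightarrow>
        qdom Q (qcomp Q g f) = qdom Q f \<and> qcod Q (qcomp Q g f) = qcod Q g"
  using assms unfolding is_quantaloid_def by (elim conjE) assumption

lemma q_ax_unit:
  assumes "is_quantaloid Q"
  shows "\<forall>f. qcomp Q f (qid Q (qdom Q f)) = f \<and> qcomp Q (qid Q (qcod Q f)) f = f"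
  using assms unfolding is_quantaloid_def by (elim conjE) assumption

lemma q_sup_upper:
  assumes "is_quantaloid Q" "S \<subseteq> qhom Q X Y" "f \<in> S"
  shows "qle Q f (qsup Q X Y S)"
  using q_ax_sup[OF assms(1)] assms(2,3) by simp

lemma q_sup_least:
  assumes "is_quantaloid Q" "S \<subseteq> qhom Q X Y" "g \<in> qhom Q X Y" "\<And>f. f \<in> S \<Longrightarrow> qle Q f g"
  shows "qle Q (qsup Q X Y S) g"
  using q_ax_sup[OF assms(1)] assms(2,3,4) by simp

lemma q_sup_hom:
  assumes "is_quantaloid Q" "S \<subseteq> qhom Q X Y"
  shows "qsup Q X Y S \<in> qhom Q X Y"
  using q_ax_sup[OF assms(1)] assms(2) by simp

lemma q_refl: "is_quantaloid Q \<Longrightarrow> qle Q f f"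
  using q_ax_refl by blast

lemma q_antisym: "is_quantaloid Q \<Longrightarrow> qle Q f g \<Longrightarrow> qle Q g f \<Longrightarrow> f = g"
  using q_ax_anti by blast

lemma q_trans: "is_quantaloid Q \<Longrightarrow> qle Q f g \<Longrightarrow> qle Q g h \<Longrightarrow> qle Q f h"
  using q_ax_trans by blast

lemma q_le_hom: "is_quantaloid Q \<Longrightarrow> qle Q f g \<Longrightarrow> qdom Q f = qdom Q g \<and> qcod Q f = qcod Q g"
  using q_ax_lehom by blast

lemma q_comp_hom:
  assumes "is_quantaloid Q" "f \<in> qhom Q X Y" "g \<in> qhom Q Y Z"
  shows "qcomp Q g f \<in> qhom Q X Z"
  using q_ax_comp[OF assms(1)] assms(2,3) unfolding qhom_def by auto

lemma q_id_hom: "is_quantaloid Q \<Longrightarrow> qid Q X \<in> qhom Q X X"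
  using q_ax_id unfolding qhom_def by auto

lemma q_comp_id_r: "is_quantaloid Q \<Longrightarrow> f \<in> qhom Q X Y \<Longrightarrow> qcomp Q f (qid Q X) = f"
  using q_ax_unit unfolding qhom_def by auto

lemma q_comp_id_l: "is_quantaloid Q \<Longrightarrow> f \<in> qhom Q X Y \<Longrightarrow> qcomp Q (qid Q Y) f = f"
  using q_ax_unit unfolding qhom_def by auto

lemma q_sup_pair:
  assumes iq: "is_quantaloid Q" and f: "f \<in> qhom Q X Y" and le: "qle Q f f'"
  shows "qsup Q X Y {f, f'} = f'"
proof -
  have f': "f' \<in> qhom Q X Y" using q_le_hom[OF iq le] f by (simp add: qhom_def)
  have S: "{f, f'} \<subseteq> qhom Q X Y" using f f' by auto
  show ?thesis
  proof (rule q_antisym[OF iq])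
    show "qle Q (qsup Q X Y {f, f'}) f'"
      using q_sup_least[OF iq S f'] le q_refl[OF iq] by auto
    show "qle Q f' (qsup Q X Y {f, f'})" using q_sup_upper[OF iq S] by auto
  qed
qed

lemma q_comp_mono_r:
  assumes iq: "is_quantaloid Q" and f: "f \<in> qhom Q X Y" and g: "g \<in> qhom Q Y Z"
    and le: "qle Q f f'"
  shows "qle Q (qcomp Q g f) (qcomp Q g f')"
proof -
  have f': "f' \<in> qhom Q X Y" using q_le_hom[OF iq le] f by (simp add: qhom_def)
  have S: "{f, f'} \<subseteq> qhom Q X Y" using f f' by auto
  have "qcomp Q g f' = qcomp Q g (qsup Q X Y {f, f'})" using q_sup_pair[OF iq f le] by simp
  also have "\<dots> = qsup Q X Z (qcomp Q g ` {f, f'})"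
    using q_ax_dl[OF iq] S g by blast
  finally have e: "qcomp Q g f' = qsup Q X Z {qcomp Q g f, qcomp Q g f'}" by simp
  have S2: "{qcomp Q g f, qcomp Q g f'} \<subseteq> qhom Q X Z"
    using q_comp_hom[OF iq f g] q_comp_hom[OF iq f' g] by auto
  have "qle Q (qcomp Q g f) (qsup Q X Z {qcomp Q g f, qcomp Q g f'})" by (rule q_sup_upper[OF iq S2]) simp
  then show ?thesis by (simp only: e[symmetric])
qed

lemma q_comp_mono_l:
  assumes iq: "is_quantaloid Q" and f: "f \<in> qhom Q X Y" and g: "g \<in> qhom Q Y Z"
    and le: "qle Q g g'"
  shows "qle Q (qcomp Q g f) (qcomp Q g' f)"
proof -
  have g': "g' \<in> qhom Q Y Z" using q_le_hom[OF iq le] g by (simp add: qhom_def)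
  have S: "{g, g'} \<subseteq> qhom Q Y Z" using g g' by auto
  have "qcomp Q g' f = qcomp Q (qsup Q Y Z {g, g'}) f" using q_sup_pair[OF iq g le] by simp
  also have "\<dots> = qsup Q X Z ((\<lambda>h. qcomp Q h f) ` {g, g'})"
    using q_ax_dr[OF iq] S f by blast
  finally have e: "qcomp Q g' f = qsup Q X Z {qcomp Q g f, qcomp Q g' f}" by simp
  have S2: "{qcomp Q g f, qcomp Q g' f} \<subseteq> qhom Q X Z"
    using q_comp_hom[OF iq f g] q_comp_hom[OF iq f g'] by auto
  have "qle Q (qcomp Q g f) (qsup Q X Z {qcomp Q g f, qcomp Q g' f})" by (rule q_sup_upper[OF iq S2]) simp
  then show ?thesis by (simp only: e[symmetric])
qed

lemma qinv_id:
  assumes "is_involutive_quantaloid Q"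
  shows "qinv Q (qid Q X) = qid Q X"
proof -
  have iq: "is_quantaloid Q" using assms by (simp add: is_involutive_quantaloid_def)
  let ?i = "qinv Q (qid Q X)"
  have di: "qdom Q ?i = X" "qcod Q ?i = X"
    using assms q_ax_id[OF iq] unfolding is_involutive_quantaloid_def by auto
  have c: "qcomp Q ?i (qid Q X) = ?i"
    using q_comp_id_r[OF iq, of ?i X X] di by (simp add: qhom_def)
  have "qinv Q (qcomp Q ?i (qid Q X)) = qcomp Q (qinv Q (qid Q X)) (qinv Q ?i)"
    using assms di q_ax_id[OF iq] unfolding is_involutive_quantaloid_def by auto
  also have "\<dots> = qcomp Q ?i (qid Q X)"
    using assms unfolding is_involutive_quantaloid_def by auto
  finally show ?thesis using c assms unfolding is_involutive_quantaloid_def by metis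
qed


lemma qcat_hom: "is_qcat Q A \<Longrightarrow> x \<in> qobj A \<Longrightarrow> y \<in> qobj A \<Longrightarrow> qhm A y x \<in> qhom Q (qty A x) (qty A y)"
  unfolding is_qcat_def by blast
lemma qcat_trans: "is_qcat Q A \<Longrightarrow> x \<in> qobj A \<Longrightarrow> y \<in> qobj A \<Longrightarrow> z \<in> qobj A \<Longrightarrow>
   qle Q (qcomp Q (qhm A z y) (qhm A y x)) (qhm A z x)"
  unfolding is_qcat_def by blast
lemma qcat_id: "is_qcat Q A \<Longrightarrow> x \<in> qobj A \<Longrightarrow> qle Q (qid Q (qty A x)) (qhm A x x)"
  unfolding is_qcat_def by blast

lemma repr_sla:
  assumes iq: "is_quantaloid Q" and sA: "is_symmetric_qcat Q A" and sB: "is_symmetric_qcat Q B"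
    and F: "is_qfunctor Q B A F"
  shows "sym_left_adjoint Q B A (repr_dist A F)"
proof -
  have cA: "is_qcat Q A" using sA unfolding is_symmetric_qcat_def by (elim conjE)
  have cB: "is_qcat Q B" using sB unfolding is_symmetric_qcat_def by (elim conjE)
  have Fo: "\<And>b. b \<in> qobj B \<Longrightarrow> F b \<in> qobj A \<and> qty A (F b) = qty B b"
    using F by (simp add: is_qfunctor_def)
  have Fm: "\<And>x y. x \<in> qobj B \<Longrightarrow> y \<in> qobj B \<Longrightarrow> qle Q (qhm B y x) (qhm A (F y) (F x))"
    using F by (simp add: is_qfunctor_def)
  have op: "\<And>a b. a \<in> qobj A \<Longrightarrow> b \<in> qobj B \<Longrightarrow> dist_op Q (repr_dist A F) b a = qhm A (F b) a"
  proof -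
    fix a b assume a: "a \<in> qobj A" and b: "b \<in> qobj B"
    have "\<forall>x\<in>qobj A. \<forall>y\<in>qobj A. qhm A x y = qinv Q (qhm A y x)"
      using sA unfolding is_symmetric_qcat_def by (elim conjE)
    then show "dist_op Q (repr_dist A F) b a = qhm A (F b) a"
      using a Fo[OF b] unfolding dist_op_def repr_dist_def by metis
  qed
  have hA: "\<And>x y. x \<in> qobj A \<Longrightarrow> y \<in> qobj A \<Longrightarrow> qhm A y x \<in> qhom Q (qty A x) (qty A y)"
    using qcat_hom[OF cA] .
  have hB: "\<And>x y. x \<in> qobj B \<Longrightarrow> y \<in> qobj B \<Longrightarrow> qhm B y x \<in> qhom Q (qty B x) (qty B y)"
    using qcat_hom[OF cB] .
  have hAF: "\<And>a b. a \<in> qobj A \<Longrightarrow> b \<in> qobj B \<Longrightarrow> qhm A a (F b) \<in> qhom Q (qty B b) (qty A a)"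
    using hA Fo by metis
  have hFA: "\<And>a b. a \<in> qobj A \<Longrightarrow> b \<in> qobj B \<Longrightarrow> qhm A (F b) a \<in> qhom Q (qty A a) (qty B b)"
    using hA Fo by metis
  have d1: "is_distributor Q B A (repr_dist A F)"
    unfolding is_distributor_def repr_dist_def
  proof (intro conjI ballI)
    fix a b assume "a \<in> qobj A" "b \<in> qobj B"
    then show "qhm A a (F b) \<in> qhom Q (qty B b) (qty A a)" using hAF by blast
  next
    fix a a' b assume "a \<in> qobj A" "a' \<in> qobj A" "b \<in> qobj B"
    then show "qle Q (qcomp Q (qhm A a' a) (qhm A a (F b))) (qhm A a' (F b))"
      using qcat_trans[OF cA] Fo by blast
  next
    fix a b b' assume a: "a \<in> qobj A" and b: "b \<in> qobj B" and b': "b' \<in> qobj B"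
    have 1: "qle Q (qcomp Q (qhm A a (F b)) (qhm B b b')) (qcomp Q (qhm A a (F b)) (qhm A (F b) (F b')))"
      using q_comp_mono_r[OF iq hB[OF b' b] hAF[OF a b] Fm[OF b' b]] .
    have 2: "qle Q (qcomp Q (qhm A a (F b)) (qhm A (F b) (F b'))) (qhm A a (F b'))"
      using qcat_trans[OF cA] Fo a b b' by blast
    show "qle Q (qcomp Q (qhm A a (F b)) (qhm B b b')) (qhm A a (F b'))" using q_trans[OF iq 1 2] .
  qed
  have d2: "is_distributor Q A B (dist_op Q (repr_dist A F))"
    unfolding is_distributor_def
  proof (intro conjI ballI)
    fix a b assume "b \<in> qobj A" "a \<in> qobj B"
    then show "dist_op Q (repr_dist A F) a b \<in> qhom Q (qty A b) (qty B a)" using hFA op by simp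
  next
    fix b b' a assume b: "b \<in> qobj B" and b': "b' \<in> qobj B" and a: "a \<in> qobj A"
    have 1: "qle Q (qcomp Q (qhm B b' b) (qhm A (F b) a)) (qcomp Q (qhm A (F b') (F b)) (qhm A (F b) a))"
      using q_comp_mono_l[OF iq hFA[OF a b] hB[OF b b'] Fm[OF b b']] .
    have 2: "qle Q (qcomp Q (qhm A (F b') (F b)) (qhm A (F b) a)) (qhm A (F b') a)"
      using qcat_trans[OF cA] Fo a b b' by blast
    show "qle Q (qcomp Q (qhm B b' b) (dist_op Q (repr_dist A F) b a)) (dist_op Q (repr_dist A F) b' a)"
      using q_trans[OF iq 1 2] op a b b' by simp
  next
    fix b a a' assume b: "b \<in> qobj B" and a: "a \<in> qobj A" and a': "a' \<in> qobj A"
    show "qle Q (qcomp Q (dist_op Q (repr_dist A F) b a) (qhm A a a')) (dist_op Q (repr_dist A F) b a')"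
      using qcat_trans[OF cA] Fo a b a' op by simp
  qed
  have u: "dist_le Q B B (qhm B) (dist_comp Q B A B (dist_op Q (repr_dist A F)) (repr_dist A F))"
    unfolding dist_le_def dist_comp_def
  proof (intro ballI)
    fix b b' assume b: "b \<in> qobj B" and b': "b' \<in> qobj B"
    let ?S = "(\<lambda>y. qcomp Q (dist_op Q (repr_dist A F) b y) (repr_dist A F y b')) ` qobj A"
    have S: "?S \<subseteq> qhom Q (qty B b') (qty B b)"
      using q_comp_hom[OF iq hAF hFA] b b' op by (auto simp: repr_dist_def)
    have m: "qcomp Q (qhm A (F b) (F b')) (qhm A (F b') (F b')) \<in> ?S"
      using Fo[OF b'] b b' op by (auto simp: repr_dist_def intro!: image_eqI[where x="F b'"])
    have e: "qcomp Q (qhm A (F b) (F b')) (qid Q (qty B b')) = qhm A (F b) (F b')"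
      using q_comp_id_r[OF iq hFA[OF _ b]] Fo[OF b'] by metis
    have 1: "qle Q (qhm B b b') (qhm A (F b) (F b'))" using Fm b b' by blast
    have 2: "qle Q (qcomp Q (qhm A (F b) (F b')) (qid Q (qty B b'))) (qcomp Q (qhm A (F b) (F b')) (qhm A (F b') (F b')))"
      using q_comp_mono_r[OF iq q_id_hom[OF iq] hFA[OF _ b] qcat_id[OF cA]] Fo[OF b'] by metis
    show "qle Q (qhm B b b') (qsup Q (qty B b') (qty B b) ?S)"
      using q_trans[OF iq 1 q_trans[OF iq 2[unfolded e] q_sup_upper[OF iq S m]]] .
  qed
  have c: "dist_le Q A A (dist_comp Q A B A (repr_dist A F) (dist_op Q (repr_dist A F))) (qhm A)"
    unfolding dist_le_def dist_comp_def
  proof (intro ballI)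
    fix a a' assume a: "a \<in> qobj A" and a': "a' \<in> qobj A"
    let ?S = "(\<lambda>y. qcomp Q (repr_dist A F a y) (dist_op Q (repr_dist A F) y a')) ` qobj B"
    have S: "?S \<subseteq> qhom Q (qty A a') (qty A a)"
      using q_comp_hom[OF iq hFA hAF] a a' op by (auto simp: repr_dist_def)
    have "\<And>f. f \<in> ?S \<Longrightarrow> qle Q f (qhm A a a')"
    proof -
      fix f assume "f \<in> ?S"
      then obtain y where y: "y \<in> qobj B" and fe: "f = qcomp Q (repr_dist A F a y) (dist_op Q (repr_dist A F) y a')"
        by blast
      have "f = qcomp Q (qhm A a (F y)) (qhm A (F y) a')" using fe op[OF a' y] by (simp add: repr_dist_def)
      then show "qle Q f (qhm A a a')" using qcat_trans[OF cA a' _ a] Fo[OF y] by simp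
    qed
    then show "qle Q (qsup Q (qty A a') (qty A a) ?S) (qhm A a a')"
      using q_sup_least[OF iq S hA[OF a' a]] by blast
  qed
  show ?thesis unfolding sym_left_adjoint_def dist_left_adjoint_def using d1 d2 u c by blast
qed


lemma repr_order:
  assumes iq: "is_quantaloid Q" and cA: "is_qcat Q A"
    and F: "is_qfunctor Q B A F" and G: "is_qfunctor Q B A G"
  shows "qfunctor_le Q B A F G \<longleftrightarrow> dist_le Q B A (repr_dist A F) (repr_dist A G)"
proof -
  have Fo: "\<And>b. b \<in> qobj B \<Longrightarrow> F b \<in> qobj A \<and> qty A (F b) = qty B b"
    using F by (simp add: is_qfunctor_def)
  have Go: "\<And>b. b \<in> qobj B \<Longrightarrow> G b \<in> qobj A \<and> qty A (G b) = qty B b"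
    using G by (simp add: is_qfunctor_def)
  show ?thesis
  proof
    assume le: "qfunctor_le Q B A F G"
    show "dist_le Q B A (repr_dist A F) (repr_dist A G)"
      unfolding dist_le_def repr_dist_def
    proof (intro ballI)
      fix a b assume a: "a \<in> qobj A" and b: "b \<in> qobj B"
      have h: "qhm A a (F b) \<in> qhom Q (qty B b) (qty A a)" using qcat_hom[OF cA] a Fo[OF b] by metis
      have e: "qcomp Q (qhm A a (F b)) (qid Q (qty B b)) = qhm A a (F b)"
        using q_comp_id_r[OF iq h] .
      have 1: "qle Q (qcomp Q (qhm A a (F b)) (qid Q (qty B b))) (qcomp Q (qhm A a (F b)) (qhm A (F b) (G b)))"
        using q_comp_mono_r[OF iq q_id_hom[OF iq] h] le b unfolding qfunctor_le_def by blast
      have 2: "qle Q (qcomp Q (qhm A a (F b)) (qhm A (F b) (G b))) (qhm A a (G b))"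
        using qcat_trans[OF cA] a Fo[OF b] Go[OF b] by blast
      show "qle Q (qhm A a (F b)) (qhm A a (G b))" using q_trans[OF iq 1[unfolded e] 2] .
    qed
  next
    assume le: "dist_le Q B A (repr_dist A F) (repr_dist A G)"
    show "qfunctor_le Q B A F G" unfolding qfunctor_le_def
    proof
      fix b assume b: "b \<in> qobj B"
      have 1: "qle Q (qid Q (qty B b)) (qhm A (F b) (F b))" using qcat_id[OF cA] Fo[OF b] by metis
      have 2: "qle Q (qhm A (F b) (F b)) (qhm A (F b) (G b))"
        using le Fo[OF b] b unfolding dist_le_def repr_dist_def by blast
      show "qle Q (qid Q (qty B b)) (qhm A (F b) (G b))" using q_trans[OF iq 1 2] .
    qed
  qed
qed

lemma column_sla:
  assumes iq: "is_quantaloid Q" and cB: "is_qcat Q B"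
    and P: "sym_left_adjoint Q B A \<Phi>" and b: "b \<in> qobj B"
  shows "sym_left_adjoint Q (star_cat Q (qty B b)) A (\<lambda>a _. \<Phi> a b)"
proof -
  let ?X = "qty B b"
  have d1: "is_distributor Q B A \<Phi>" and d2: "is_distributor Q A B (dist_op Q \<Phi>)"
    and u: "dist_le Q B B (qhm B) (dist_comp Q B A B (dist_op Q \<Phi>) \<Phi>)"
    and c: "dist_le Q A A (dist_comp Q A B A \<Phi> (dist_op Q \<Phi>)) (qhm A)"
    using P unfolding sym_left_adjoint_def dist_left_adjoint_def by auto
  have h1: "\<And>a. a \<in> qobj A \<Longrightarrow> \<Phi> a b \<in> qhom Q ?X (qty A a)" using d1 b unfolding is_distributor_def by blast
  have h2: "\<And>a. a \<in> qobj A \<Longrightarrow> qinv Q (\<Phi> a b) \<in> qhom Q (qty A a) ?X"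
    using d2 b unfolding is_distributor_def dist_op_def by blast
  have D1: "is_distributor Q (star_cat Q ?X) A (\<lambda>a _. \<Phi> a b)"
    unfolding is_distributor_def star_cat_def
    using h1 d1 b q_comp_id_r[OF iq h1] q_refl[OF iq] unfolding is_distributor_def by auto
  have D2: "is_distributor Q A (star_cat Q ?X) (dist_op Q (\<lambda>a _. \<Phi> a b))"
    unfolding is_distributor_def star_cat_def dist_op_def
    using h2 d2 b q_comp_id_l[OF iq h2] q_refl[OF iq] unfolding is_distributor_def dist_op_def by auto
  have U: "dist_le Q (star_cat Q ?X) (star_cat Q ?X) (qhm (star_cat Q ?X))
       (dist_comp Q (star_cat Q ?X) A (star_cat Q ?X) (dist_op Q (\<lambda>a _. \<Phi> a b)) (\<lambda>a _. \<Phi> a b))"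
  proof -
    have "qle Q (qhm B b b) (dist_comp Q B A B (dist_op Q \<Phi>) \<Phi> b b)" using u b unfolding dist_le_def by blast
    then have "qle Q (qid Q ?X) (dist_comp Q B A B (dist_op Q \<Phi>) \<Phi> b b)"
      using q_trans[OF iq qcat_id[OF cB b]] by blast
    then show ?thesis unfolding dist_le_def star_cat_def dist_comp_def dist_op_def by simp
  qed
  have C: "dist_le Q A A (dist_comp Q A (star_cat Q ?X) A (\<lambda>a _. \<Phi> a b) (dist_op Q (\<lambda>a _. \<Phi> a b))) (qhm A)"
    unfolding dist_le_def
  proof (intro ballI)
    fix a a' assume a: "a \<in> qobj A" and a': "a' \<in> qobj A"
    let ?S = "(\<lambda>y. qcomp Q (\<Phi> a y) (dist_op Q \<Phi> y a')) ` qobj B"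
    have hS: "?S \<subseteq> qhom Q (qty A a') (qty A a)"
    proof
      fix f assume "f \<in> ?S"
      then obtain y where y: "y \<in> qobj B" and fe: "f = qcomp Q (\<Phi> a y) (dist_op Q \<Phi> y a')" by blast
      have "\<Phi> a y \<in> qhom Q (qty B y) (qty A a)" using d1 a y unfolding is_distributor_def by blast
      moreover have "dist_op Q \<Phi> y a' \<in> qhom Q (qty A a') (qty B y)" using d2 a' y unfolding is_distributor_def by blast
      ultimately show "f \<in> qhom Q (qty A a') (qty A a)" using fe q_comp_hom[OF iq] by blast
    qed
    have m: "qcomp Q (\<Phi> a b) (qinv Q (\<Phi> a' b)) \<in> ?S" using b by (auto simp: dist_op_def)
    have 1: "qle Q (qcomp Q (\<Phi> a b) (qinv Q (\<Phi> a' b))) (qsup Q (qty A a') (qty A a) ?S)"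
      using q_sup_upper[OF iq hS m] .
    have 2: "qle Q (qsup Q (qty A a') (qty A a) ?S) (qhm A a a')"
      using c a a' unfolding dist_le_def dist_comp_def by blast
    have hm: "qcomp Q (\<Phi> a b) (qinv Q (\<Phi> a' b)) \<in> qhom Q (qty A a') (qty A a)"
      using q_comp_hom[OF iq h2[OF a'] h1[OF a]] .
    have hA: "qhm A a a' \<in> qhom Q (qty A a') (qty A a)" using P a a' unfolding sym_left_adjoint_def dist_left_adjoint_def
      using 2 q_le_hom[OF iq 2] q_sup_hom[OF iq hS] by (simp add: qhom_def)
    show "qle Q (dist_comp Q A (star_cat Q ?X) A (\<lambda>a _. \<Phi> a b) (dist_op Q (\<lambda>a _. \<Phi> a b)) a a') (qhm A a a')"
      unfolding dist_comp_def star_cat_def dist_op_def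
      using q_sup_least[OF iq _ hA, of "{qcomp Q (\<Phi> a b) (qinv Q (\<Phi> a' b))}"] hm q_trans[OF iq 1 2] by simp
  qed
  show ?thesis unfolding sym_left_adjoint_def dist_left_adjoint_def using D1 D2 U C by blast
qed


lemma sing_sym:
  assumes iv: "is_involutive_quantaloid Q"
  shows "is_symmetric_qcat Q (\<lparr>qobj = {u}, qty = (\<lambda>_. X), qhm = (\<lambda>_ _. qid Q X)\<rparr> :: ('b, 'o, 'm) qcat)"
proof -
  have iq: "is_quantaloid Q" using iv by (simp add: is_involutive_quantaloid_def)
  have e: "qcomp Q (qid Q X) (qid Q X) = qid Q X" using q_comp_id_r[OF iq q_id_hom[OF iq]] .
  show ?thesis unfolding is_symmetric_qcat_def is_qcat_def
    using q_id_hom[OF iq] e q_refl[OF iq] qinv_id[OF iv] by simp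
qed

lemma sing_transfer:
  assumes "sym_left_adjoint Q (star_cat Q X) A \<phi>"
  shows "sym_left_adjoint Q (\<lparr>qobj = {u}, qty = (\<lambda>_. X), qhm = (\<lambda>_ _. qid Q X)\<rparr> :: ('b, 'o, 'm) qcat) A (\<lambda>a _. \<phi> a ())"
  using assms
  unfolding sym_left_adjoint_def dist_left_adjoint_def is_distributor_def dist_le_def dist_comp_def
    dist_op_def star_cat_def
  by simp

theorem proposition3p2:
  fixes Q :: "('o, 'm) quantaloid" and A :: "('a, 'o, 'm) qcat"
  assumes "is_involutive_quantaloid Q"
    and "is_symmetric_qcat Q A"
  shows "((\<forall>B :: ('b, 'o, 'm) qcat. is_symmetric_qcat Q B \<longrightarrow> sym_complete_wrt Q A B)
            \<longleftrightarrow>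
          (\<forall>B :: ('b, 'o, 'm) qcat. is_symmetric_qcat Q B \<longrightarrow>
             (\<forall>\<Phi>. sym_left_adjoint Q B A \<Phi> \<longrightarrow> representable Q B A \<Phi>)))
       \<and>
         ((\<forall>B :: ('b, 'o, 'm) qcat. is_symmetric_qcat Q B \<longrightarrow>
             (\<forall>\<Phi>. sym_left_adjoint Q B A \<Phi> \<longrightarrow> representable Q B A \<Phi>))
            \<longleftrightarrow>
          (\<forall>X. \<forall>\<phi>. sym_left_adjoint Q (star_cat Q X) A \<phi> \<longrightarrow>
             representable Q (star_cat Q X) A \<phi>))"
proof -
  note iv = assms(1)
  have iq: "is_quantaloid Q" using iv by (simp add: is_involutive_quantaloid_def)
  have sA: "is_symmetric_qcat Q A" using assms(2) .
  have cA: "is_qcat Q A" using sA unfolding is_symmetric_qcat_def by (elim conjE)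
  let ?P2 = "\<forall>B :: ('b, 'o, 'm) qcat. is_symmetric_qcat Q B \<longrightarrow>
             (\<forall>\<Phi>. sym_left_adjoint Q B A \<Phi> \<longrightarrow> representable Q B A \<Phi>)"
  have part1: "(\<forall>B :: ('b, 'o, 'm) qcat. is_symmetric_qcat Q B \<longrightarrow> sym_complete_wrt Q A B) \<longleftrightarrow> ?P2"
  proof
    assume H: "\<forall>B :: ('b, 'o, 'm) qcat. is_symmetric_qcat Q B \<longrightarrow> sym_complete_wrt Q A B"
    show ?P2
    proof (intro allI impI)
      fix B :: "('b, 'o, 'm) qcat" and \<Phi> assume sB: "is_symmetric_qcat Q B" and P: "sym_left_adjoint Q B A \<Phi>"
      obtain F where F: "is_qfunctor Q B A F" "dist_le Q B A (repr_dist A F) \<Phi>" "dist_le Q B A \<Phi> (repr_dist A F)"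
        using H sB P unfolding sym_complete_wrt_def by blast
      show "representable Q B A \<Phi>" unfolding representable_def
        using F q_antisym[OF iq] unfolding dist_le_def by blast
    qed
  next
    assume H: ?P2
    show "\<forall>B :: ('b, 'o, 'm) qcat. is_symmetric_qcat Q B \<longrightarrow> sym_complete_wrt Q A B"
    proof (intro allI impI)
      fix B :: "('b, 'o, 'm) qcat" assume sB: "is_symmetric_qcat Q B"
      have a: "\<forall>\<Phi>. sym_left_adjoint Q B A \<Phi> \<longrightarrow>
        (\<exists>F. is_qfunctor Q B A F \<and> dist_le Q B A (repr_dist A F) \<Phi> \<and> dist_le Q B A \<Phi> (repr_dist A F))"
      proof (intro allI impI)
        fix \<Phi> assume "sym_left_adjoint Q B A \<Phi>"
        then obtain F where "is_qfunctor Q B A F" "\<forall>a\<in>qobj A. \<forall>b\<in>qobj B. \<Phi> a b = repr_dist A F a b"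
          using H sB unfolding representable_def by blast
        then show "\<exists>F. is_qfunctor Q B A F \<and> dist_le Q B A (repr_dist A F) \<Phi> \<and> dist_le Q B A \<Phi> (repr_dist A F)"
          unfolding dist_le_def using q_refl[OF iq] by metis
      qed
      show "sym_complete_wrt Q A B" unfolding sym_complete_wrt_def
        using repr_sla[OF iq sA sB] repr_order[OF iq cA] a by blast
    qed
  qed
  have part2: "?P2 \<longleftrightarrow> (\<forall>X. \<forall>\<phi>. sym_left_adjoint Q (star_cat Q X) A \<phi> \<longrightarrow>
             representable Q (star_cat Q X) A \<phi>)"
  proof
    assume H: ?P2
    show "\<forall>X. \<forall>\<phi>. sym_left_adjoint Q (star_cat Q X) A \<phi> \<longrightarrow> representable Q (star_cat Q X) A \<phi>"
    proof (intro allI impI)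
      fix X \<phi> assume P: "sym_left_adjoint Q (star_cat Q X) A \<phi>"
      define B where "B = (\<lparr>qobj = {undefined}, qty = (\<lambda>_. X), qhm = (\<lambda>_ _. qid Q X)\<rparr> :: ('b, 'o, 'm) qcat)"
      have sB: "is_symmetric_qcat Q B" unfolding B_def by (rule sing_sym[OF iv])
      have PB: "sym_left_adjoint Q B A (\<lambda>a _. \<phi> a ())" unfolding B_def by (rule sing_transfer[OF P])
      obtain F where F: "is_qfunctor Q B A F" "\<forall>a\<in>qobj A. \<forall>b\<in>qobj B. \<phi> a () = repr_dist A F a b"
        using H sB PB unfolding representable_def by blast
      show "representable Q (star_cat Q X) A \<phi>" unfolding representable_def
        apply (rule exI[where x="\<lambda>_. F undefined"])
        using F unfolding B_def star_cat_def is_qfunctor_def repr_dist_def by auto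
    qed
  next
    assume H: "\<forall>X. \<forall>\<phi>. sym_left_adjoint Q (star_cat Q X) A \<phi> \<longrightarrow> representable Q (star_cat Q X) A \<phi>"
    show ?P2
    proof (intro allI impI)
      fix B :: "('b, 'o, 'm) qcat" and \<Phi> assume sB: "is_symmetric_qcat Q B" and P: "sym_left_adjoint Q B A \<Phi>"
      have cB: "is_qcat Q B" using sB unfolding is_symmetric_qcat_def by (elim conjE)
      have "\<forall>b\<in>qobj B. \<exists>x. x \<in> qobj A \<and> qty A x = qty B b \<and> (\<forall>a\<in>qobj A. \<Phi> a b = qhm A a x)"
      proof
        fix b assume b: "b \<in> qobj B"
        obtain G where G: "is_qfunctor Q (star_cat Q (qty B b)) A G"
            "\<forall>a\<in>qobj A. \<forall>u\<in>qobj (star_cat Q (qty B b)). \<Phi> a b = repr_dist A G a u"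
          using H column_sla[OF iq cB P b] unfolding representable_def by blast
        show "\<exists>x. x \<in> qobj A \<and> qty A x = qty B b \<and> (\<forall>a\<in>qobj A. \<Phi> a b = qhm A a x)"
          apply (rule exI[where x="G ()"])
          using G unfolding is_qfunctor_def star_cat_def repr_dist_def by auto
      qed
      then obtain F where F: "\<And>b. b \<in> qobj B \<Longrightarrow> F b \<in> qobj A \<and> qty A (F b) = qty B b \<and> (\<forall>a\<in>qobj A. \<Phi> a b = qhm A a (F b))"
        by metis
      have d1: "is_distributor Q B A \<Phi>" using P unfolding sym_left_adjoint_def dist_left_adjoint_def by blast
      have func: "is_qfunctor Q B A F" unfolding is_qfunctor_def
      proof (intro conjI ballI)
        fix x assume "x \<in> qobj B" then show "F x \<in> qobj A" "qty A (F x) = qty B x" using F by auto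
      next
        fix x y assume x: "x \<in> qobj B" and y: "y \<in> qobj B"
        have hB: "qhm B y x \<in> qhom Q (qty B x) (qty B y)" using qcat_hom[OF cB x y] .
        have hP: "\<Phi> (F y) y \<in> qhom Q (qty B y) (qty A (F y))" using d1 F[OF y] y unfolding is_distributor_def by blast
        have e: "qcomp Q (qid Q (qty B y)) (qhm B y x) = qhm B y x" using q_comp_id_l[OF iq hB] .
        have 1: "qle Q (qcomp Q (qid Q (qty B y)) (qhm B y x)) (qcomp Q (\<Phi> (F y) y) (qhm B y x))"
          using q_comp_mono_l[OF iq hB q_id_hom[OF iq]] qcat_id[OF cA] F[OF y] by metis
        have 2: "qle Q (qcomp Q (\<Phi> (F y) y) (qhm B y x)) (\<Phi> (F y) x)"
          using d1 F[OF y] x y unfolding is_distributor_def by blast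
        show "qle Q (qhm B y x) (qhm A (F y) (F x))"
          using q_trans[OF iq 1[unfolded e] 2] F[OF x] F[OF y] by metis
      qed
      show "representable Q B A \<Phi>" unfolding representable_def repr_dist_def
        using func F by blast
    qed
  qed
  show ?thesis using part1 part2 by blast
qed

end
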